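(* Let $n\geq 1$. Among all topological trees with exactly $n$ leaves, the star $K_{1,n}$ is the one with the smallest Matula number. Moreover, $M(K_{1,n})=2^n$ for all $n>1$.
   Context: Let $p_m$ denote the $m$-th prime number ($p_1=2,p_2=3,p_3=5,\ldots$). All trees are rooted. The branches of a rooted tree $T$ are the components (rooted at the children of the root) that remain after deleting the root of $T$ and its incident edges. The Matula number $M(T)$ of a rooted tree is defined recursively: $M(K_1)=1$ for the one-vertex tree, and if $T$ has branches $T_1,\ldots,T_r$ then $M(T)=p_{M(T_1)}\cdot p_{M(T_2)}\cdots p_{M(T_r)}$. A leaf is a vertex of outdegree $0$ (so the one-vertex tree has one leaf). A topological tree is a rooted tree with no vertex of outdegree $1$. The star $K_{1,n}$ is the rooted tree consisting of a root with $n$ leaves attached directly to it. *)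

theory Defs
  imports "HOL-Computational_Algebra.Primes" "HOL-Library.Multiset"
begin

datatype rtree = Node "rtree multiset"

text \<open>The m-th prime, 1-indexed: p 1 = 2, p 2 = 3, ... (p is the unique prime with exactly
  m - 1 primes below it).\<close>
definition nth_prime :: "nat \<Rightarrow> nat" where
  "nth_prime m = (THE p. prime p \<and> card {q. prime q \<and> q < p} = m - 1)"

primrec matula :: "rtree \<Rightarrow> nat" where
  "matula (Node cs) = prod_mset (image_mset (\<lambda>c. nth_prime (matula c)) cs)"

primrec leaves :: "rtree \<Rightarrow> nat" where
  "leaves (Node cs) = (if cs = {#} then 1 else sum_mset (image_mset leaves cs))"

primrec topological :: "rtree \<Rightarrow> bool" where
  "topological (Node cs) = (size cs \<noteq> 1 \<and> (\<forall>b \<in># image_mset topological cs. b))"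

definition star :: "nat \<Rightarrow> rtree" where
  "star n = Node (replicate_mset n (Node {#}))"

end

theory Submission
  imports Defs "HOL-Library.Infinite_Set"
begin

definition ep :: "nat \<Rightarrow> nat" where "ep = enumerate {p::nat. prime p}"

lemma inf_pr: "infinite {p::nat. prime p}" using primes_infinite by blast

lemma ep_card: "card {q. prime q \<and> q < ep k} = k"
proof -
  have "{q. prime q \<and> q < ep k} = ep ` {..<k}"
  proof
    show "{q. prime q \<and> q < ep k} \<subseteq> ep ` {..<k}"
    proof
      fix q assume q: "q \<in> {q. prime q \<and> q < ep k}"
      then obtain j where "ep j = q" using enumerate_Ex[OF inf_pr] unfolding ep_def by blast
      with q show "q \<in> ep ` {..<k}" unfolding ep_def using inf_pr by auto
    qed
    show "ep ` {..<k} \<subseteq> {q. prime q \<and> q < ep k}"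
      unfolding ep_def using inf_pr enumerate_in_set[OF inf_pr] by auto
  qed
  moreover have "inj ep" unfolding ep_def using inj_enumerate[OF inf_pr] .
  ultimately show ?thesis by (simp add: card_image inj_on_subset)
qed

lemma nth_prime_ep: "m \<ge> 1 \<Longrightarrow> nth_prime m = ep (m - 1)"
  unfolding nth_prime_def
proof (rule the_equality)
  show "prime (ep (m - 1)) \<and> card {q. prime q \<and> q < ep (m - 1)} = m - 1"
    using ep_card enumerate_in_set[OF inf_pr] unfolding ep_def by auto
  fix p :: nat assume p: "prime p \<and> card {q. prime q \<and> q < p} = m - 1"
  then obtain j where j: "ep j = p" using enumerate_Ex[OF inf_pr] unfolding ep_def by blast
  with p ep_card[of j] have "j = m - 1" by simp
  with j show "p = ep (m - 1)" by simp
qed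

lemma ep0: "ep 0 = 2"
  unfolding ep_def enumerate_0
proof (rule Least_equality)
  show "2 \<in> {p::nat. prime p}" by simp
  fix y :: nat assume "y \<in> {p. prime p}" then show "2 \<le> y" using prime_ge_2_nat by auto
qed

lemma ep_ge: "ep k \<ge> k + 2"
proof (induction k)
  case 0 then show ?case using ep0 by simp
next
  case (Suc k)
  have "ep k < ep (Suc k)" unfolding ep_def using enumerate_step[OF inf_pr] .
  with Suc show ?case by simp
qed

lemma np1: "nth_prime 1 = 2" using nth_prime_ep[of 1] ep0 by simp

lemma np1' [simp]: "nth_prime (Suc 0) = 2" using np1 by simp

lemma pm_pos: "(\<And>x. x \<in># M \<Longrightarrow> 0 < (f x::nat)) \<Longrightarrow> 0 < prod_mset (image_mset f M)"
  by (induction M) auto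

lemma np_gt: "m \<ge> 1 \<Longrightarrow> nth_prime m > m" using nth_prime_ep ep_ge[of "m-1"] by force

lemma np_pos: "nth_prime m > 0 \<or> m = 0"
  using np_gt[of m] by auto

lemma matula_pos: "matula T \<ge> 1"
proof (induction T)
  case (Node cs)
  have "\<forall>c \<in># cs. nth_prime (matula c) > 0" using Node np_gt by force
  then show ?case using pm_pos[of cs "\<lambda>c. nth_prime (matula c)"] by auto
qed

lemma pow_sum: "(2::nat) ^ sum_mset (image_mset f M) = prod_mset (image_mset (\<lambda>c. 2 ^ f c) M)"
  by (induction M) (simp_all add: power_add)

lemma pm_le: "(\<And>x. x \<in># M \<Longrightarrow> f x \<le> (g x::nat)) \<Longrightarrow> prod_mset (image_mset f M) \<le> prod_mset (image_mset g M)"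
  by (induction M) (simp_all add: mult_le_mono)

lemma pm_lt: assumes "x \<in># M" "f x < (g x::nat)" "\<And>y. y \<in># M \<Longrightarrow> f y \<le> g y" "\<And>y. y \<in># M \<Longrightarrow> 0 < f y"
  shows "prod_mset (image_mset f M) < prod_mset (image_mset g M)"
proof -
  obtain M' where M: "M = add_mset x M'" using assms(1) by (metis multi_member_split)
  have A: "prod_mset (image_mset f M') \<le> prod_mset (image_mset g M')"
    using assms(3) M by (intro pm_le) auto
  have B: "prod_mset (image_mset f M') > 0" using assms(4) M
    by (intro pm_pos) auto
  have "f x * prod_mset (image_mset f M') < g x * prod_mset (image_mset f M')"
    using assms(2) B by simp
  also have "\<dots> \<le> g x * prod_mset (image_mset g M')" using A by simp
  finally show ?thesis using M by simp
qed

lemma key: "topological T \<Longrightarrow> T \<noteq> Node {#} \<Longrightarrow> 2 ^ leaves T \<le> matula T"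
proof (induction T)
  case (Node cs)
  have cs: "cs \<noteq> {#}" using Node.prems by auto
  have f: "2 ^ leaves c \<le> nth_prime (matula c)" if c: "c \<in># cs" for c
  proof (cases "c = Node {#}")
    case True then show ?thesis by (simp add: np1)
  next
    case False
    have "topological c" using Node.prems c by auto
    then have "2 ^ leaves c \<le> matula c" using Node.IH c False by auto
    also have "\<dots> < nth_prime (matula c)" using np_gt matula_pos by auto
    finally show ?thesis by simp
  qed
  have "(2::nat) ^ leaves (Node cs) = prod_mset (image_mset (\<lambda>c. 2 ^ leaves c) cs)"
    using cs by (simp add: pow_sum)
  also have "\<dots> \<le> matula (Node cs)"
    using f by (simp add: pm_le)
  finally show ?case .
qed

lemma f_le: "topological c \<Longrightarrow> 2 ^ leaves c \<le> nth_prime (matula c)"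
proof (cases "c = Node {#}")
  case True then show ?thesis by (simp add: np1)
next
  case False
  assume "topological c"
  then have "2 ^ leaves c \<le> matula c" using key False by auto
  also have "\<dots> < nth_prime (matula c)" using np_gt matula_pos by auto
  finally show ?thesis by simp
qed

lemma f_lt: "topological c \<Longrightarrow> c \<noteq> Node {#} \<Longrightarrow> 2 ^ leaves c < nth_prime (matula c)"
proof -
  assume "topological c" "c \<noteq> Node {#}"
  then have "2 ^ leaves c \<le> matula c" using key by auto
  also have "\<dots> < nth_prime (matula c)" using np_gt matula_pos by auto
  finally show ?thesis by simp
qed

lemma allleaf: "(\<And>c. c \<in># cs \<Longrightarrow> c = x) \<Longrightarrow> cs = replicate_mset (size cs) x"
  by (induction cs) auto

theorem mainTheorem1:
  fixes n :: nat
  assumes "n \<ge> 2"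
  shows "topological (star n) \<and> leaves (star n) = n
    \<and> (\<forall>T. topological T \<and> leaves T = n \<and> T \<noteq> star n \<longrightarrow> matula (star n) < matula T)
    \<and> matula (star n) = 2 ^ n"
proof -
  have ms: "matula (star n) = 2 ^ n" by (simp add: star_def np1)
  have ls: "leaves (star n) = n" using assms by (simp add: star_def)
  have ts: "topological (star n)" using assms by (simp add: star_def)
  have "matula (star n) < matula T" if T: "topological T" "leaves T = n" "T \<noteq> star n" for T
  proof -
    obtain cs where Tc: "T = Node cs" by (cases T)
    have cs: "cs \<noteq> {#}"
    proof
      assume "cs = {#}"
      then have "leaves T = 1" using Tc by simp
      then show False using T(2) assms by simp
    qed
    have "\<exists>c. c \<in># cs \<and> c \<noteq> Node {#}"
    proof (rule ccontr)
      assume "\<not> ?thesis"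
      then have "cs = replicate_mset (size cs) (Node {#})" by (intro allleaf) auto
      then obtain k where k: "cs = replicate_mset k (Node {#})" by blast
      have "leaves T = k" using Tc cs k by simp
      then have "T = star n" using T(2) Tc k unfolding star_def by simp
      then show False using T(3) by simp
    qed
    then obtain c where c: "c \<in># cs" "c \<noteq> Node {#}" by blast
    have tc: "\<And>y. y \<in># cs \<Longrightarrow> topological y" using T Tc by auto
    have ln: "sum_mset (image_mset leaves cs) = n" using T(2) Tc cs by simp
    have "matula (star n) = prod_mset (image_mset (\<lambda>c. 2 ^ leaves c) cs)"
      unfolding ms pow_sum[symmetric] ln ..
    also have "\<dots> < matula T" unfolding Tc matula.simps
      by (rule pm_lt[OF c(1)]) (use f_lt f_le tc c in auto)
    finally show ?thesis .
  qed
  then show ?thesis using ms ls ts by blast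
qed

end
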